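(* Let $T$ be a quaternion tensor of size $2\times2\times3$ (two frontal slices, each a $2\times3$ quaternion matrix) or of size $3\times2\times2$ (two frontal slices, each a $3\times2$ quaternion matrix). Then $\mathrm{rank}(T)\le3$.
   Context: $\mathbb{H}$ denotes the real quaternions. An $n_1\times n_2\times n_3$ quaternion tensor is an array $T=(T_{ijk})$ with entries in $\mathbb{H}$, $1\le i\le n_1$, $1\le j\le n_2$, $1\le k\le n_3$; it is written $T=(A_1;\dots;A_{n_2})$ where the frontal slice $A_j$ is the $n_1\times n_3$ matrix $(T_{ijk})_{i,k}$. A nonzero tensor is simple if $T_{ijk}=a_ib_jc_k$ (quaternion product in this order) for some $\vec a\in\mathbb{H}^{n_1},\vec b\in\mathbb{H}^{n_2},\vec c\in\mathbb{H}^{n_3}$. The rank of $T$ is the least number of simple tensors summing to $T$ (the zero tensor has rank $0$). *)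

theory Defs
  imports Main "HOL.Real"
begin

text \<open>Real quaternions H: q = Re + Im1 i + Im2 j + Im3 k, with i^2 = j^2 = k^2 = ijk = -1.\<close>

codatatype quat = Quat (Re: real) (Im1: real) (Im2: real) (Im3: real)

lemma quat_eqI [intro?]:
  "Re x = Re y \<Longrightarrow> Im1 x = Im1 y \<Longrightarrow> Im2 x = Im2 y \<Longrightarrow> Im3 x = Im3 y \<Longrightarrow> x = y"
  by (rule quat.expand) simp

instantiation quat :: ring_1
begin

primcorec zero_quat where
  "Re 0 = 0" | "Im1 0 = 0" | "Im2 0 = 0" | "Im3 0 = 0"

primcorec one_quat where
  "Re 1 = 1" | "Im1 1 = 0" | "Im2 1 = 0" | "Im3 1 = 0"

primcorec plus_quat where
  "Re (x + y) = Re x + Re y" | "Im1 (x + y) = Im1 x + Im1 y"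
| "Im2 (x + y) = Im2 x + Im2 y" | "Im3 (x + y) = Im3 x + Im3 y"

primcorec uminus_quat where
  "Re (- x) = - Re x" | "Im1 (- x) = - Im1 x" | "Im2 (- x) = - Im2 x" | "Im3 (- x) = - Im3 x"

primcorec minus_quat where
  "Re (x - y) = Re x - Re y" | "Im1 (x - y) = Im1 x - Im1 y"
| "Im2 (x - y) = Im2 x - Im2 y" | "Im3 (x - y) = Im3 x - Im3 y"

primcorec times_quat where
  "Re (x * y) = Re x * Re y - Im1 x * Im1 y - Im2 x * Im2 y - Im3 x * Im3 y"
| "Im1 (x * y) = Re x * Im1 y + Im1 x * Re y + Im2 x * Im3 y - Im3 x * Im2 y"
| "Im2 (x * y) = Re x * Im2 y - Im1 x * Im3 y + Im2 x * Re y + Im3 x * Im1 y"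
| "Im3 (x * y) = Re x * Im3 y + Im1 x * Im2 y - Im2 x * Im1 y + Im3 x * Re y"

instance
  proof
  show "(0::quat) \<noteq> 1" by (metis one_quat.sel(1) zero_quat.sel(1) zero_neq_one)
qed (auto intro: quat_eqI simp: algebra_simps)

end

text \<open>Tensors of size n1 x n2 x n3 are represented as functions nat => nat => nat => quat,
  with 0-based indices i < n1, j < n2, k < n3 (entries outside this box are irrelevant).\<close>

type_synonym qtensor = "nat \<Rightarrow> nat \<Rightarrow> nat \<Rightarrow> quat"

definition simple_qtensor :: "nat \<Rightarrow> nat \<Rightarrow> nat \<Rightarrow> qtensor \<Rightarrow> bool" where
  "simple_qtensor n1 n2 n3 S \<longleftrightarrow>
     (\<exists>i<n1. \<exists>j<n2. \<exists>k<n3. S i j k \<noteq> 0) \<and>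
     (\<exists>a b c :: nat \<Rightarrow> quat. \<forall>i<n1. \<forall>j<n2. \<forall>k<n3. S i j k = a i * b j * c k)"

definition qtensor_rank :: "nat \<Rightarrow> nat \<Rightarrow> nat \<Rightarrow> qtensor \<Rightarrow> nat" where
  "qtensor_rank n1 n2 n3 T = (LEAST r. \<exists>S :: nat \<Rightarrow> qtensor.
      (\<forall>l<r. simple_qtensor n1 n2 n3 (S l)) \<and>
      (\<forall>i<n1. \<forall>j<n2. \<forall>k<n3. T i j k = (\<Sum>l<r. S l i j k)))"

end

theory Submission
  imports Defs
begin

definition qnorm2 :: "quat \<Rightarrow> real" where
  "qnorm2 x = Re x * Re x + Im1 x * Im1 x + Im2 x * Im2 x + Im3 x * Im3 x"

definition qinv :: "quat \<Rightarrow> quat" where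
  "qinv x = Quat (Re x / qnorm2 x) (- Im1 x / qnorm2 x) (- Im2 x / qnorm2 x) (- Im3 x / qnorm2 x)"

lemma qnorm2_nz: assumes "x \<noteq> 0" shows "qnorm2 x \<noteq> 0"
proof
  assume h: "qnorm2 x = 0"
  have "Re x = 0 \<and> Im1 x = 0 \<and> Im2 x = 0 \<and> Im3 x = 0"
  proof -
    have s: "Re x * Re x + Im1 x * Im1 x + Im2 x * Im2 x + Im3 x * Im3 x = 0"
      using h unfolding qnorm2_def .
    have p: "0 \<le> Re x * Re x" "0 \<le> Im1 x * Im1 x" "0 \<le> Im2 x * Im2 x" "0 \<le> Im3 x * Im3 x"
      by simp_all
    have "Re x * Re x = 0" "Im1 x * Im1 x = 0" "Im2 x * Im2 x = 0" "Im3 x * Im3 x = 0"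
      using s p by linarith+
    thus ?thesis by simp
  qed
  hence "x = 0" by (intro quat_eqI) auto
  with assms show False by simp
qed

lemma qinv_left: assumes "x \<noteq> 0" shows "qinv x * x = 1"
proof -
  have n: "qnorm2 x \<noteq> 0" using qnorm2_nz[OF assms] .
  define n where "n = qnorm2 x"
  have nn: "n = Re x * Re x + Im1 x * Im1 x + Im2 x * Im2 x + Im3 x * Im3 x" "n \<noteq> 0"
    using n by (auto simp: n_def qnorm2_def)
  have qi: "qinv x = Quat (Re x / n) (- Im1 x / n) (- Im2 x / n) (- Im3 x / n)"
    by (simp add: qinv_def n_def)
  have r: "\<And>a b c d :: real. n = a*a+b*b+c*c+d*d \<Longrightarrow> n \<noteq> 0 \<Longrightarrow>
      (a/n)*a - (-b/n)*b - (-c/n)*c - (-d/n)*d = 1"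
  proof -
    fix a b c d :: real assume h: "n = a*a+b*b+c*c+d*d" "n \<noteq> 0"
    have "(a/n)*a - (-b/n)*b - (-c/n)*c - (-d/n)*d = (a*a+b*b+c*c+d*d)/n"
      by (simp add: diff_divide_distrib add_divide_distrib)
    also have "\<dots> = 1" using h by simp
    finally show "(a/n)*a - (-b/n)*b - (-c/n)*c - (-d/n)*d = 1" .
  qed
  have z: "\<And>a b c d :: real. (a/n)*b + (-b/n)*a + (-c/n)*d - (-d/n)*c = 0"
    by (simp add: algebra_simps)
  have z2: "\<And>a b c d :: real. (a/n)*b - (-c/n)*d + (-b/n)*a + (-d/n)*c = 0"
    by (simp add: algebra_simps)
  have z3: "\<And>a b c d :: real. (a/n)*b + (-c/n)*d - (-d/n)*c + (-b/n)*a = 0"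
    by (simp add: algebra_simps)
  have e1: "Re (qinv x * x) = 1" unfolding qi times_quat.sel quat.sel by (rule r[OF nn])
  have e2: "Im1 (qinv x * x) = 0" unfolding qi times_quat.sel quat.sel by (rule z)
  have e3: "Im2 (qinv x * x) = 0" unfolding qi times_quat.sel quat.sel by (rule z2)
  have e4: "Im3 (qinv x * x) = 0" unfolding qi times_quat.sel quat.sel by (rule z3)
  have f1: "Re (qinv x * x) = Re 1" by (simp only: e1 one_quat.sel)
  have f2: "Im1 (qinv x * x) = Im1 1" by (simp only: e2 one_quat.sel)
  have f3: "Im2 (qinv x * x) = Im2 1" by (simp only: e3 one_quat.sel)
  have f4: "Im3 (qinv x * x) = Im3 1" by (simp only: e4 one_quat.sel)
  show ?thesis using f1 f2 f3 f4 by (rule quat_eqI)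
qed

lemma sum3: "(\<Sum>l<(3::nat). f l) = f 0 + f 1 + (f 2 :: 'a::comm_monoid_add)"
  by (simp add: numeral_3_eq_3 numeral_2_eq_2 add.assoc)

lemma decomp3:
  fixes T :: qtensor and p p' q q' :: nat and \<alpha> \<beta> \<gamma> :: quat
  assumes rel: "\<forall>k<3. T p q k = \<alpha> * T p' q k + \<beta> * T p q' k + \<gamma> * T p' q' k"
    and pp: "p \<noteq> p'" "p < 2" "p' < 2" and qq: "q \<noteq> q'" "q < 2" "q' < 2"
  shows "\<exists>(a :: nat \<Rightarrow> nat \<Rightarrow> quat) (b :: nat \<Rightarrow> nat \<Rightarrow> quat) (c :: nat \<Rightarrow> nat \<Rightarrow> quat). \<forall>i<2. \<forall>j<2. \<forall>k<3.
           T i j k = (\<Sum>l<(3::nat). a l i * b l j * c l k)"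
proof -
  define r where "r = \<alpha> + 1"
  define s where "s = \<gamma> + \<beta> * r"
  define a where "a = (\<lambda>(l::nat) i. if l = 0 then (if i = p' then 1 else r)
                      else if l = 1 then (if i = p' then 1 else \<alpha>)
                      else (if i = p' then 0 else (1::quat)))"
  define b where "b = (\<lambda>(l::nat) j. if l = 0 then (if j = q' then 1 else s)
                      else if l = 1 then (if j = q' then 0 else 1)
                      else (if j = q' then 1 else \<beta>))"
  define c where "c = (\<lambda>(l::nat) k. if l = 0 then T p' q' k
                      else if l = 1 then T p' q k - s * T p' q' k
                      else T p q' k - r * T p' q' k)"
  have "\<forall>i<2. \<forall>j<2. \<forall>k<3. T i j k = (\<Sum>l<(3::nat). a l i * b l j * c l k)"
  proof (intro allI impI)
    fix i j k assume i: "i < (2::nat)" and j: "j < (2::nat)" and k: "k < (3::nat)"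
    have ii: "i = p \<or> i = p'" using i pp by linarith
    have jj: "j = q \<or> j = q'" using j qq by linarith
    have key: "r * s - \<alpha> * s - \<beta> * r = \<gamma>"
      unfolding r_def s_def by (simp add: algebra_simps)
    have e: "T p q k = r * s * T p' q' k + \<alpha> * (T p' q k - s * T p' q' k) + \<beta> * (T p q' k - r * T p' q' k)"
    proof -
      have "r * s * T p' q' k + \<alpha> * (T p' q k - s * T p' q' k) + \<beta> * (T p q' k - r * T p' q' k)
          = (r * s - \<alpha> * s - \<beta> * r) * T p' q' k + \<alpha> * T p' q k + \<beta> * T p q' k"
        by (simp add: algebra_simps)
      also have "\<dots> = T p q k" using key rel k by (simp add: algebra_simps)
      finally show ?thesis by simp
    qed
    have S: "(\<Sum>l<(3::nat). a l i * b l j * c l k) = a 0 i * b 0 j * c 0 k + a 1 i * b 1 j * c 1 k + a 2 i * b 2 j * c 2 k"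
      by (rule sum3)
    have c0: "c 0 k = T p' q' k" and c1: "c 1 k = T p' q k - s * T p' q' k"
      and c2: "c 2 k = T p q' k - r * T p' q' k" by (simp_all add: c_def)
    have "T i j k = a 0 i * b 0 j * (T p' q' k) + a 1 i * b 1 j * (T p' q k - s * T p' q' k) + a 2 i * b 2 j * (T p q' k - r * T p' q' k)"
    proof (cases "i = p'")
      case True
      then show ?thesis
      proof (cases "j = q'")
        case True
        then show ?thesis using \<open>i = p'\<close> by (simp add: a_def b_def)
      next
        case False
        then have "j = q" using jj by simp
        then show ?thesis using \<open>i = p'\<close> qq(1) by (simp add: a_def b_def)
      qed
    next
      case False
      then have ip: "i = p" using ii by simp
      then show ?thesis
      proof (cases "j = q'")
        case True
        then show ?thesis using ip pp(1) by (simp add: a_def b_def)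
      next
        case False
        then have "j = q" using jj by simp
        then show ?thesis using ip pp(1) qq(1) e by (simp add: a_def b_def)
      qed
    qed
    then show "T i j k = (\<Sum>l<(3::nat). a l i * b l j * c l k)"
      unfolding S c0 c1 c2 .
  qed
  thus ?thesis by blast
qed


lemma solve4:
  fixes x y a b c A B C :: quat
  assumes x: "x \<noteq> 0" and h: "a * A + b * B + c * C + x * y = 0"
  shows "y = (- (qinv x * a)) * A + (- (qinv x * b)) * B + (- (qinv x * c)) * C"
proof -
  have "- (a * A + b * B + c * C) = x * y" using h by (simp only: neg_eq_iff_add_eq_0)
  hence "x * y = - (a * A + b * B + c * C)" by simp
  hence "qinv x * (x * y) = qinv x * (- (a * A + b * B + c * C))" by simp
  hence "y = qinv x * (- (a * A + b * B + c * C))"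
    by (simp add: mult.assoc[symmetric] qinv_left[OF x])
  thus ?thesis by (simp add: algebra_simps)
qed

lemma dep:
  fixes v :: "nat \<Rightarrow> nat \<Rightarrow> quat"
  shows "finite I \<Longrightarrow> n < card I \<Longrightarrow>
    \<exists>lam. (\<exists>m\<in>I. lam m \<noteq> 0) \<and> (\<forall>k<n. (\<Sum>m\<in>I. lam m * v m k) = 0)"
proof (induction n arbitrary: I v)
  case 0
  then have "I \<noteq> {}" by auto
  then obtain m where "m \<in> I" by blast
  then show ?case by (intro exI[of _ "\<lambda>_. 1"]) auto
next
  case (Suc n)
  show ?case
  proof (cases "\<forall>m\<in>I. v m n = 0")
    case True
    from Suc.IH[of I v] Suc.prems obtain lam where
      l: "\<exists>m\<in>I. lam m \<noteq> 0" "\<forall>k<n. (\<Sum>m\<in>I. lam m * v m k) = 0" by auto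
    have "\<forall>k<Suc n. (\<Sum>m\<in>I. lam m * v m k) = 0"
    proof (intro allI impI)
      fix k assume "k < Suc n"
      then consider "k < n" | "k = n" by linarith
      then show "(\<Sum>m\<in>I. lam m * v m k) = 0" using l(2) True by cases auto
    qed
    with l(1) show ?thesis by blast
  next
    case False
    then obtain p where p: "p \<in> I" "v p n \<noteq> 0" by auto
    define d where "d m = v m n * qinv (v p n)" for m
    define w where "w m k = v m k - d m * v p k" for m k
    have fin: "finite (I - {p})" using Suc.prems by simp
    have cardI: "n < card (I - {p})" using Suc.prems p by simp
    from Suc.IH[OF fin cardI, of w] obtain mu where
      mu: "\<exists>m\<in>I-{p}. mu m \<noteq> 0" "\<forall>k<n. (\<Sum>m\<in>I-{p}. mu m * w m k) = 0" by auto
    define lam where "lam m = (if m = p then - (\<Sum>m\<in>I-{p}. mu m * d m) else mu m)" for m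
    have key: "(\<Sum>m\<in>I. lam m * v m k) = (\<Sum>m\<in>I-{p}. mu m * w m k)" for k
    proof -
      have "(\<Sum>m\<in>I. lam m * v m k) = lam p * v p k + (\<Sum>m\<in>I-{p}. lam m * v m k)"
        using Suc.prems(1) p(1) by (simp add: sum.remove)
      also have "(\<Sum>m\<in>I-{p}. lam m * v m k) = (\<Sum>m\<in>I-{p}. mu m * v m k)"
        by (rule sum.cong) (auto simp: lam_def)
      also have "lam p = - (\<Sum>m\<in>I-{p}. mu m * d m)" by (simp add: lam_def)
      finally have 1: "(\<Sum>m\<in>I. lam m * v m k) = - (\<Sum>m\<in>I-{p}. mu m * d m) * v p k + (\<Sum>m\<in>I-{p}. mu m * v m k)" .
      have "(\<Sum>m\<in>I-{p}. mu m * w m k) = (\<Sum>m\<in>I-{p}. mu m * v m k - mu m * d m * v p k)"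
        by (rule sum.cong) (auto simp: w_def right_diff_distrib mult.assoc)
      also have "\<dots> = (\<Sum>m\<in>I-{p}. mu m * v m k) - (\<Sum>m\<in>I-{p}. mu m * d m) * v p k"
        by (simp add: sum_subtractf sum_distrib_right)
      finally show ?thesis using 1 by simp
    qed
    have wn: "w m n = 0" for m
    proof -
      have "d m * v p n = v m n * (qinv (v p n) * v p n)" by (simp add: d_def mult.assoc)
      also have "\<dots> = v m n" by (simp add: qinv_left[OF p(2)])
      finally show ?thesis by (simp add: w_def)
    qed
    have "\<forall>k<Suc n. (\<Sum>m\<in>I. lam m * v m k) = 0"
    proof (intro allI impI)
      fix k assume "k < Suc n"
      then consider "k < n" | "k = n" by linarith
      then show "(\<Sum>m\<in>I. lam m * v m k) = 0" unfolding key using mu(2) wn by cases auto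
    qed
    moreover have "\<exists>m\<in>I. lam m \<noteq> 0" using mu(1) by (auto simp: lam_def)
    ultimately show ?thesis by blast
  qed
qed

lemma rank_aux:
  fixes a b c :: "nat \<Rightarrow> nat \<Rightarrow> quat"
  shows "\<exists>r'\<le>r. \<exists>S :: nat \<Rightarrow> qtensor. (\<forall>l<r'. simple_qtensor n1 n2 n3 (S l)) \<and>
     (\<forall>i<n1. \<forall>j<n2. \<forall>k<n3. (\<Sum>l<r. a l i * b l j * c l k) = (\<Sum>l<r'. S l i j k))"
proof (induction r)
  case 0
  show ?case by (intro exI[of _ 0]) auto
next
  case (Suc r)
  then obtain r' S where r': "r' \<le> r" "\<forall>l<r'. simple_qtensor n1 n2 n3 (S l)"
    "\<forall>i<n1. \<forall>j<n2. \<forall>k<n3. (\<Sum>l<r. a l i * b l j * c l k) = (\<Sum>l<r'. S l i j k)" by blast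
  define t where "t = (\<lambda>i j k. a r i * b r j * c r k)"
  show ?case
  proof (cases "\<exists>i<n1. \<exists>j<n2. \<exists>k<n3. t i j k \<noteq> 0")
    case True
    have st: "simple_qtensor n1 n2 n3 t"
      unfolding simple_qtensor_def using True by (auto simp: t_def)
    define S' where "S' = S(r' := t)"
    have "\<forall>l<Suc r'. simple_qtensor n1 n2 n3 (S' l)"
      using r'(2) st by (auto simp: S'_def less_Suc_eq)
    moreover have "\<forall>i<n1. \<forall>j<n2. \<forall>k<n3. (\<Sum>l<Suc r. a l i * b l j * c l k) = (\<Sum>l<Suc r'. S' l i j k)"
    proof (intro allI impI)
      fix i j k assume h: "i < n1" "j < n2" "k < n3"
      have "(\<Sum>l<r'. S' l i j k) = (\<Sum>l<r'. S l i j k)"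
        by (rule sum.cong) (auto simp: S'_def)
      then show "(\<Sum>l<Suc r. a l i * b l j * c l k) = (\<Sum>l<Suc r'. S' l i j k)"
        using r'(3) h by (simp add: S'_def t_def)
    qed
    ultimately show ?thesis using r'(1) by (intro exI[of _ "Suc r'"]) auto
  next
    case False
    have "\<forall>i<n1. \<forall>j<n2. \<forall>k<n3. (\<Sum>l<Suc r. a l i * b l j * c l k) = (\<Sum>l<r'. S l i j k)"
      using r'(3) False by (simp add: t_def)
    then show ?thesis using r'(1,2) by (intro exI[of _ r']) auto
  qed
qed

lemma rank_le:
  fixes a b c :: "nat \<Rightarrow> nat \<Rightarrow> quat" and T :: qtensor
  assumes "\<forall>i<n1. \<forall>j<n2. \<forall>k<n3. T i j k = (\<Sum>l<r. a l i * b l j * c l k)"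
  shows "qtensor_rank n1 n2 n3 T \<le> r"
proof -
  obtain r' S where r': "r' \<le> r" "\<forall>l<r'. simple_qtensor n1 n2 n3 (S l)"
    "\<forall>i<n1. \<forall>j<n2. \<forall>k<n3. (\<Sum>l<r. a l i * b l j * c l k) = (\<Sum>l<r'. S l i j k)"
    using rank_aux[of r n1 n2 n3 a b c] by blast
  have "\<exists>S :: nat \<Rightarrow> qtensor. (\<forall>l<r'. simple_qtensor n1 n2 n3 (S l)) \<and>
      (\<forall>i<n1. \<forall>j<n2. \<forall>k<n3. T i j k = (\<Sum>l<r'. S l i j k))"
    using r' assms by auto
  hence "qtensor_rank n1 n2 n3 T \<le> r'" unfolding qtensor_rank_def by (rule Least_le)
  with r'(1) show ?thesis by simp
qed


lemma sum4: "(\<Sum>l<(4::nat). f l) = f 0 + f 1 + f 2 + (f 3 :: 'a::comm_monoid_add)"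
  by (simp add: numeral_3_eq_3 numeral_2_eq_2 add.assoc eval_nat_numeral)

lemma main223:
  fixes T :: qtensor
  shows "\<exists>(a :: nat \<Rightarrow> nat \<Rightarrow> quat) (b :: nat \<Rightarrow> nat \<Rightarrow> quat) (c :: nat \<Rightarrow> nat \<Rightarrow> quat). \<forall>i<2. \<forall>j<2. \<forall>k<3.
           T i j k = (\<Sum>l<(3::nat). a l i * b l j * c l k)"
proof -
  obtain lam where l: "\<exists>m\<in>{..<4}. lam m \<noteq> 0"
    "\<forall>k<3. (\<Sum>m\<in>{..<4::nat}. lam m * T (m div 2) (m mod 2) k) = 0"
    using dep[of "{..<4::nat}" 3 "\<lambda>m k. T (m div 2) (m mod 2) k"] by auto
  have eq: "lam 0 * T 0 0 k + lam 1 * T 0 1 k + lam 2 * T 1 0 k + lam 3 * T 1 1 k = 0"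
    if "k < 3" for k
    using l(2) that unfolding sum4 by simp
  obtain m0 where m0: "m0 < 4" "lam m0 \<noteq> 0" using l(1) by auto
  have "m0 = 0 \<or> m0 = 1 \<or> m0 = 2 \<or> m0 = 3" using m0(1) by linarith
  then consider "m0 = 0" | "m0 = 1" | "m0 = 2" | "m0 = 3" by blast
  then show ?thesis
  proof cases
    case 1
    with m0 have x: "lam 0 \<noteq> 0" by simp
    show ?thesis
    proof (rule decomp3[of T 0 0 _ 1 _ 1])
      show "\<forall>k<3. T 0 0 k = (- (qinv (lam 0) * lam 2)) * T 1 0 k + (- (qinv (lam 0) * lam 1)) * T 0 1 k
               + (- (qinv (lam 0) * lam 3)) * T 1 1 k"
      proof (intro allI impI)
        fix k :: nat assume k: "k < 3"
        have "lam 2 * T 1 0 k + lam 1 * T 0 1 k + lam 3 * T 1 1 k + lam 0 * T 0 0 k = 0"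
          using eq[OF k] by (simp add: ac_simps)
        from solve4[OF x this] show "T 0 0 k = (- (qinv (lam 0) * lam 2)) * T 1 0 k + (- (qinv (lam 0) * lam 1)) * T 0 1 k
               + (- (qinv (lam 0) * lam 3)) * T 1 1 k" .
      qed
    qed auto
  next
    case 2
    with m0 have x: "lam 1 \<noteq> 0" by simp
    show ?thesis
    proof (rule decomp3[of T 0 1 _ 1 _ 0])
      show "\<forall>k<3. T 0 1 k = (- (qinv (lam 1) * lam 3)) * T 1 1 k + (- (qinv (lam 1) * lam 0)) * T 0 0 k
               + (- (qinv (lam 1) * lam 2)) * T 1 0 k"
      proof (intro allI impI)
        fix k :: nat assume k: "k < 3"
        have "lam 3 * T 1 1 k + lam 0 * T 0 0 k + lam 2 * T 1 0 k + lam 1 * T 0 1 k = 0"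
          using eq[OF k] by (simp add: ac_simps)
        from solve4[OF x this] show "T 0 1 k = (- (qinv (lam 1) * lam 3)) * T 1 1 k + (- (qinv (lam 1) * lam 0)) * T 0 0 k
               + (- (qinv (lam 1) * lam 2)) * T 1 0 k" .
      qed
    qed auto
  next
    case 3
    with m0 have x: "lam 2 \<noteq> 0" by simp
    show ?thesis
    proof (rule decomp3[of T 1 0 _ 0 _ 1])
      show "\<forall>k<3. T 1 0 k = (- (qinv (lam 2) * lam 0)) * T 0 0 k + (- (qinv (lam 2) * lam 3)) * T 1 1 k
               + (- (qinv (lam 2) * lam 1)) * T 0 1 k"
      proof (intro allI impI)
        fix k :: nat assume k: "k < 3"
        have "lam 0 * T 0 0 k + lam 3 * T 1 1 k + lam 1 * T 0 1 k + lam 2 * T 1 0 k = 0"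
          using eq[OF k] by (simp add: ac_simps)
        from solve4[OF x this] show "T 1 0 k = (- (qinv (lam 2) * lam 0)) * T 0 0 k + (- (qinv (lam 2) * lam 3)) * T 1 1 k
               + (- (qinv (lam 2) * lam 1)) * T 0 1 k" .
      qed
    qed auto
  next
    case 4
    with m0 have x: "lam 3 \<noteq> 0" by simp
    show ?thesis
    proof (rule decomp3[of T 1 1 _ 0 _ 0])
      show "\<forall>k<3. T 1 1 k = (- (qinv (lam 3) * lam 1)) * T 0 1 k + (- (qinv (lam 3) * lam 2)) * T 1 0 k
               + (- (qinv (lam 3) * lam 0)) * T 0 0 k"
      proof (intro allI impI)
        fix k :: nat assume k: "k < 3"
        have "lam 1 * T 0 1 k + lam 2 * T 1 0 k + lam 0 * T 0 0 k + lam 3 * T 1 1 k = 0"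
          using eq[OF k] by (simp add: ac_simps)
        from solve4[OF x this] show "T 1 1 k = (- (qinv (lam 3) * lam 1)) * T 0 1 k + (- (qinv (lam 3) * lam 2)) * T 1 0 k
               + (- (qinv (lam 3) * lam 0)) * T 0 0 k" .
      qed
    qed auto
  qed
qed

primcorec qconj :: "quat \<Rightarrow> quat" where
  "Re (qconj x) = Re x" | "Im1 (qconj x) = - Im1 x" | "Im2 (qconj x) = - Im2 x" | "Im3 (qconj x) = - Im3 x"

lemma qconj_mult: "qconj (x * y) = qconj y * qconj x"
  by (rule quat_eqI) (simp_all add: algebra_simps)

lemma qconj_add: "qconj (x + y) = qconj x + qconj y"
  by (rule quat_eqI) simp_all

lemma qconj_zero: "qconj 0 = 0"
  by (rule quat_eqI) simp_all

lemma qconj_qconj: "qconj (qconj x) = x"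
  by (rule quat_eqI) simp_all

lemma qconj_sum: "qconj (\<Sum>l<(r::nat). f l) = (\<Sum>l<r. qconj (f l))"
  by (induction r) (simp_all add: qconj_add qconj_zero)

lemma main322:
  fixes T :: qtensor
  shows "\<exists>(a :: nat \<Rightarrow> nat \<Rightarrow> quat) (b :: nat \<Rightarrow> nat \<Rightarrow> quat) (c :: nat \<Rightarrow> nat \<Rightarrow> quat). \<forall>i<3. \<forall>j<2. \<forall>k<2.
           T i j k = (\<Sum>l<(3::nat). a l i * b l j * c l k)"
proof -
  define T' :: qtensor where "T' = (\<lambda>k j i. qconj (T i j k))"
  obtain a b c :: "nat \<Rightarrow> nat \<Rightarrow> quat" where abc: "\<forall>i<2. \<forall>j<2. \<forall>k<3.
           T' i j k = (\<Sum>l<(3::nat). a l i * b l j * c l k)"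
    using main223[of T'] by blast
  have "\<forall>i<3. \<forall>j<2. \<forall>k<2.
     T i j k = (\<Sum>l<(3::nat). (\<lambda>l i. qconj (c l i)) l i * (\<lambda>l j. qconj (b l j)) l j * (\<lambda>l k. qconj (a l k)) l k)"
  proof (intro allI impI)
    fix i j k :: nat assume h: "i < 3" "j < 2" "k < 2"
    have "T i j k = qconj (T' k j i)" by (simp add: T'_def qconj_qconj)
    also have "\<dots> = qconj (\<Sum>l<(3::nat). a l k * b l j * c l i)" using abc h by simp
    also have "\<dots> = (\<Sum>l<(3::nat). qconj (c l i) * qconj (b l j) * qconj (a l k))"
      by (simp add: qconj_sum qconj_mult mult.assoc)
    finally show "T i j k = (\<Sum>l<(3::nat). (\<lambda>l i. qconj (c l i)) l i * (\<lambda>l j. qconj (b l j)) l j * (\<lambda>l k. qconj (a l k)) l k)"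
      by simp
  qed
  thus ?thesis
    by (intro exI[of _ "\<lambda>l i. qconj (c l i)"] exI[of _ "\<lambda>l j. qconj (b l j)"] exI[of _ "\<lambda>l k. qconj (a l k)"])
qed

theorem mainTheorem8:
  fixes T :: qtensor and n1 n2 n3 :: nat
  assumes "(n1, n2, n3) = (2, 2, 3) \<or> (n1, n2, n3) = (3, 2, 2)"
  shows "qtensor_rank n1 n2 n3 T \<le> 3"
  using assms
proof
  assume h: "(n1, n2, n3) = (2, 2, 3)"
  obtain a b c :: "nat \<Rightarrow> nat \<Rightarrow> quat" where "\<forall>i<2. \<forall>j<2. \<forall>k<3.
           T i j k = (\<Sum>l<(3::nat). a l i * b l j * c l k)" using main223[of T] by blast
  then show ?thesis using h by (auto intro: rank_le)
next
  assume h: "(n1, n2, n3) = (3, 2, 2)"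
  obtain a b c :: "nat \<Rightarrow> nat \<Rightarrow> quat" where "\<forall>i<3. \<forall>j<2. \<forall>k<2.
           T i j k = (\<Sum>l<(3::nat). a l i * b l j * c l k)" using main322[of T] by blast
  then show ?thesis using h by (auto intro: rank_le)
qed

end
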